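(* Regard spinors as vectors in the 4-dimensional Euclidean space $(\mathrm{Cl}^+(3),(\cdot,\cdot))$. Then: (i) $\{a_1a_1=1,\ a_1a_2\}$ is a set of simple roots of a root system of type $A_2$ contained in the $H_4$ root system $2I$; (ii) $\{a_1a_1=1,\ a_2a_3\}$ is a set of simple roots of a root system of type $H_2$ contained in $2I$; (iii) $\{a_1a_1,\ a_1a_2,\ a_1a_2a_3a_2a_3a_1a_2a_3,\ a_3a_2a_1a_3a_2a_1a_3a_2\}$ is a set of simple roots of a root system of type $D_4$ contained in $2I$. (Here products are geometric products, and a set of simple roots of the given type means its Cartan matrix $A_{ij}=2(\alpha_i,\alpha_j)/(\alpha_i,\alpha_i)$ is that of the given type and the root system generated from it by the reflections $s_R(X)=-R\tilde XR$ lies in $2I$.)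
   Context: $\mathrm{Cl}(3)$ is the real Clifford algebra of Euclidean $\mathbb{R}^3$ with orthonormal basis $e_1,e_2,e_3$ ($e_i^2=1$, $e_ie_j=-e_je_i$ for $i\neq j$). Its even subalgebra $\mathrm{Cl}^+(3)$ is spanned by $1,e_2e_3,e_3e_1,e_1e_2$ (spinors). Reversal $\tilde{\ }$ reverses the order of vector factors. The spinor inner product is $(R_1,R_2)=\tfrac12(R_1\tilde R_2+R_2\tilde R_1)$, making $\mathrm{Cl}^+(3)$ a 4D Euclidean space with orthonormal basis $1,e_2e_3,e_3e_1,e_1e_2$; for a unit spinor $R$ the reflection in the hyperplane orthogonal to $R$ is $s_R(X)=X-2(R,X)R=-R\tilde XR$. Root systems are finite sets of nonzero vectors spanning their span, containing only $\pm\alpha$ among multiples of each root $\alpha$, and closed under the reflections in their roots. Let $\tau=\frac{1+\sqrt5}{2}$. The $H_3$ simple roots are $a_1=e_2$, $a_2=\tfrac12(-\tau e_1-e_2-(\tau-1)e_3)$, $a_3=e_1$. The binary icosahedral group $2I$ is the set of all products of an even number of factors from $\{a_1,a_2,a_3\}$ (a group of order 120); viewed as 120 vectors in the 4D spinor space it is the $H_4$ root system. The Cartan matrices are $A_2$: $\begin{pmatrix}2&-1\\-1&2\end{pmatrix}$; $H_2$: $\begin{pmatrix}2&-\tau\\-\tau&2\end{pmatrix}$; $D_4$: the standard Cartan matrix of the $D_4$ Dynkin diagram (one central node joined by simple links to three others). *)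

theory Defs
  imports Complex_Main
begin

text \<open>A multivector is represented by its coefficients on the basis blades
  e_I, I a subset of {1,2,3} (listed in increasing order); coefficients on
  sets outside Pow {1,2,3} are zero for all elements built below.\<close>

type_synonym cl3 = "nat set \<Rightarrow> real"

definition blades :: "nat set set" where
  "blades = Pow {1,2,3}"

text \<open>Sign of e_I e_J = sign * e_(I symmetric-difference J), using e_i^2 = 1 and
  anticommutation of distinct e_i.\<close>
definition bsign :: "nat set \<Rightarrow> nat set \<Rightarrow> real" where
  "bsign I J = (-1) ^ card {(i, j). i \<in> I \<and> j \<in> J \<and> j < i}"

definition cmul :: "cl3 \<Rightarrow> cl3 \<Rightarrow> cl3" where
  "cmul x y = (\<lambda>S. \<Sum>I\<in>blades. \<Sum>J\<in>blades.
      if (I - J) \<union> (J - I) = S then bsign I J * x I * y J else 0)"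

definition cadd :: "cl3 \<Rightarrow> cl3 \<Rightarrow> cl3" where
  "cadd x y = (\<lambda>S. x S + y S)"

definition cscale :: "real \<Rightarrow> cl3 \<Rightarrow> cl3" where
  "cscale c x = (\<lambda>S. c * x S)"

definition cone :: cl3 where
  "cone = (\<lambda>S. if S = {} then 1 else 0)"

definition cvec :: "nat \<Rightarrow> cl3" where
  "cvec i = (\<lambda>S. if S = {i} then 1 else 0)"

text \<open>Reversion: reverses the order of vector factors of a blade.\<close>
definition crev :: "cl3 \<Rightarrow> cl3" where
  "crev x = (\<lambda>S. (-1) ^ (card S * (card S - 1) div 2) * x S)"

definition cprod :: "cl3 list \<Rightarrow> cl3" where
  "cprod xs = foldr cmul xs cone"

text \<open>Spinor inner product (R1,R2) = 1/2 (R1 ~R2 + R2 ~R1), a scalar; we take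
  its scalar (grade 0) component.\<close>
definition sinner :: "cl3 \<Rightarrow> cl3 \<Rightarrow> real" where
  "sinner x y = (1/2) * (cmul x (crev y) {} + cmul y (crev x) {})"

definition srefl :: "cl3 \<Rightarrow> cl3 \<Rightarrow> cl3" where
  "srefl R X = cscale (-1) (cmul R (cmul (crev X) R))"

definition tau :: real where
  "tau = (1 + sqrt 5) / 2"

definition a1 :: cl3 where "a1 = cvec 2"
definition a2 :: cl3 where
  "a2 = cscale (1/2) (cadd (cscale (- tau) (cvec 1))
                       (cadd (cscale (-1) (cvec 2)) (cscale (- (tau - 1)) (cvec 3))))"
definition a3 :: cl3 where "a3 = cvec 1"

definition twoI :: "cl3 set" where
  "twoI = {cprod xs | xs. set xs \<subseteq> {a1, a2, a3} \<and> even (length xs)}"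

inductive_set gen_roots :: "cl3 set \<Rightarrow> cl3 set" for S :: "cl3 set" where
  base: "\<alpha> \<in> S \<Longrightarrow> \<alpha> \<in> gen_roots S"
| refl: "\<alpha> \<in> gen_roots S \<Longrightarrow> \<beta> \<in> gen_roots S \<Longrightarrow> srefl \<alpha> \<beta> \<in> gen_roots S"

definition cartan :: "cl3 list \<Rightarrow> nat \<Rightarrow> nat \<Rightarrow> real" where
  "cartan rs i j = 2 * sinner (rs ! i) (rs ! j) / sinner (rs ! i) (rs ! i)"

definition simple_roots_in_2I :: "cl3 list \<Rightarrow> real list list \<Rightarrow> bool" where
  "simple_roots_in_2I rs M \<longleftrightarrow>
     length M = length rs \<and> (\<forall>i < length rs. length (M ! i) = length rs) \<and>
     (\<forall>i < length rs. \<forall>j < length rs. cartan rs i j = M ! i ! j) \<and>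
     set rs \<subseteq> twoI \<and> gen_roots (set rs) \<subseteq> twoI"

definition cartan_A2 :: "real list list" where
  "cartan_A2 = [[2, -1], [-1, 2]]"

definition cartan_H2 :: "real list list" where
  "cartan_H2 = [[2, - tau], [- tau, 2]]"

definition cartan_D4 :: "real list list" where
  "cartan_D4 = [[2, -1, -1, -1], [-1, 2, 0, 0], [-1, 0, 2, 0], [-1, 0, 0, 2]]"

end

theory Submission
  imports Defs
begin
definition symd :: "nat set \<Rightarrow> nat set \<Rightarrow> nat set" where "symd I J = (I - J) \<union> (J - I)"

lemma bs1: "bsign {} {} = 1"
  unfolding bsign_def
proof -
  have eq: "{(i, j). i \<in> ({}::nat set) \<and> j \<in> ({}::nat set) \<and> j < i} = {}" by auto
  show "(-1::real) ^ card {(i, j). i \<in> ({}::nat set) \<and> j \<in> ({}::nat set) \<and> j < i} = 1" unfolding eq by simp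
qed

lemma sd1: "symd {} {} = {}" unfolding symd_def by auto

lemma bs2: "bsign {} {1} = 1"
  unfolding bsign_def
proof -
  have eq: "{(i, j). i \<in> ({}::nat set) \<and> j \<in> ({1}::nat set) \<and> j < i} = {}" by auto
  show "(-1::real) ^ card {(i, j). i \<in> ({}::nat set) \<and> j \<in> ({1}::nat set) \<and> j < i} = 1" unfolding eq by simp
qed

lemma sd2: "symd {} {1} = {1}" unfolding symd_def by auto

lemma bs3: "bsign {} {2} = 1"
  unfolding bsign_def
proof -
  have eq: "{(i, j). i \<in> ({}::nat set) \<and> j \<in> ({2}::nat set) \<and> j < i} = {}" by auto
  show "(-1::real) ^ card {(i, j). i \<in> ({}::nat set) \<and> j \<in> ({2}::nat set) \<and> j < i} = 1" unfolding eq by simp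
qed

lemma sd3: "symd {} {2} = {2}" unfolding symd_def by auto

lemma bs4: "bsign {} {3} = 1"
  unfolding bsign_def
proof -
  have eq: "{(i, j). i \<in> ({}::nat set) \<and> j \<in> ({3}::nat set) \<and> j < i} = {}" by auto
  show "(-1::real) ^ card {(i, j). i \<in> ({}::nat set) \<and> j \<in> ({3}::nat set) \<and> j < i} = 1" unfolding eq by simp
qed

lemma sd4: "symd {} {3} = {3}" unfolding symd_def by auto

lemma bs5: "bsign {} {1,2} = 1"
  unfolding bsign_def
proof -
  have eq: "{(i, j). i \<in> ({}::nat set) \<and> j \<in> ({1,2}::nat set) \<and> j < i} = {}" by auto
  show "(-1::real) ^ card {(i, j). i \<in> ({}::nat set) \<and> j \<in> ({1,2}::nat set) \<and> j < i} = 1" unfolding eq by simp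
qed

lemma sd5: "symd {} {1,2} = {1,2}" unfolding symd_def by auto

lemma bs6: "bsign {} {1,3} = 1"
  unfolding bsign_def
proof -
  have eq: "{(i, j). i \<in> ({}::nat set) \<and> j \<in> ({1,3}::nat set) \<and> j < i} = {}" by auto
  show "(-1::real) ^ card {(i, j). i \<in> ({}::nat set) \<and> j \<in> ({1,3}::nat set) \<and> j < i} = 1" unfolding eq by simp
qed

lemma sd6: "symd {} {1,3} = {1,3}" unfolding symd_def by auto

lemma bs7: "bsign {} {2,3} = 1"
  unfolding bsign_def
proof -
  have eq: "{(i, j). i \<in> ({}::nat set) \<and> j \<in> ({2,3}::nat set) \<and> j < i} = {}" by auto
  show "(-1::real) ^ card {(i, j). i \<in> ({}::nat set) \<and> j \<in> ({2,3}::nat set) \<and> j < i} = 1" unfolding eq by simp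
qed

lemma sd7: "symd {} {2,3} = {2,3}" unfolding symd_def by auto

lemma bs8: "bsign {} {1,2,3} = 1"
  unfolding bsign_def
proof -
  have eq: "{(i, j). i \<in> ({}::nat set) \<and> j \<in> ({1,2,3}::nat set) \<and> j < i} = {}" by auto
  show "(-1::real) ^ card {(i, j). i \<in> ({}::nat set) \<and> j \<in> ({1,2,3}::nat set) \<and> j < i} = 1" unfolding eq by simp
qed

lemma sd8: "symd {} {1,2,3} = {1,2,3}" unfolding symd_def by auto

lemma bs9: "bsign {1} {} = 1"
  unfolding bsign_def
proof -
  have eq: "{(i, j). i \<in> ({1}::nat set) \<and> j \<in> ({}::nat set) \<and> j < i} = {}" by auto
  show "(-1::real) ^ card {(i, j). i \<in> ({1}::nat set) \<and> j \<in> ({}::nat set) \<and> j < i} = 1" unfolding eq by simp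
qed

lemma sd9: "symd {1} {} = {1}" unfolding symd_def by auto

lemma bs10: "bsign {1} {1} = 1"
  unfolding bsign_def
proof -
  have eq: "{(i, j). i \<in> ({1}::nat set) \<and> j \<in> ({1}::nat set) \<and> j < i} = {}" by auto
  show "(-1::real) ^ card {(i, j). i \<in> ({1}::nat set) \<and> j \<in> ({1}::nat set) \<and> j < i} = 1" unfolding eq by simp
qed

lemma sd10: "symd {1} {1} = {}" unfolding symd_def by auto

lemma bs11: "bsign {1} {2} = 1"
  unfolding bsign_def
proof -
  have eq: "{(i, j). i \<in> ({1}::nat set) \<and> j \<in> ({2}::nat set) \<and> j < i} = {}" by auto
  show "(-1::real) ^ card {(i, j). i \<in> ({1}::nat set) \<and> j \<in> ({2}::nat set) \<and> j < i} = 1" unfolding eq by simp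
qed

lemma sd11: "symd {1} {2} = {1,2}" unfolding symd_def by auto

lemma bs12: "bsign {1} {3} = 1"
  unfolding bsign_def
proof -
  have eq: "{(i, j). i \<in> ({1}::nat set) \<and> j \<in> ({3}::nat set) \<and> j < i} = {}" by auto
  show "(-1::real) ^ card {(i, j). i \<in> ({1}::nat set) \<and> j \<in> ({3}::nat set) \<and> j < i} = 1" unfolding eq by simp
qed

lemma sd12: "symd {1} {3} = {1,3}" unfolding symd_def by auto

lemma bs13: "bsign {1} {1,2} = 1"
  unfolding bsign_def
proof -
  have eq: "{(i, j). i \<in> ({1}::nat set) \<and> j \<in> ({1,2}::nat set) \<and> j < i} = {}" by auto
  show "(-1::real) ^ card {(i, j). i \<in> ({1}::nat set) \<and> j \<in> ({1,2}::nat set) \<and> j < i} = 1" unfolding eq by simp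
qed

lemma sd13: "symd {1} {1,2} = {2}" unfolding symd_def by auto

lemma bs14: "bsign {1} {1,3} = 1"
  unfolding bsign_def
proof -
  have eq: "{(i, j). i \<in> ({1}::nat set) \<and> j \<in> ({1,3}::nat set) \<and> j < i} = {}" by auto
  show "(-1::real) ^ card {(i, j). i \<in> ({1}::nat set) \<and> j \<in> ({1,3}::nat set) \<and> j < i} = 1" unfolding eq by simp
qed

lemma sd14: "symd {1} {1,3} = {3}" unfolding symd_def by auto

lemma bs15: "bsign {1} {2,3} = 1"
  unfolding bsign_def
proof -
  have eq: "{(i, j). i \<in> ({1}::nat set) \<and> j \<in> ({2,3}::nat set) \<and> j < i} = {}" by auto
  show "(-1::real) ^ card {(i, j). i \<in> ({1}::nat set) \<and> j \<in> ({2,3}::nat set) \<and> j < i} = 1" unfolding eq by simp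
qed

lemma sd15: "symd {1} {2,3} = {1,2,3}" unfolding symd_def by auto

lemma bs16: "bsign {1} {1,2,3} = 1"
  unfolding bsign_def
proof -
  have eq: "{(i, j). i \<in> ({1}::nat set) \<and> j \<in> ({1,2,3}::nat set) \<and> j < i} = {}" by auto
  show "(-1::real) ^ card {(i, j). i \<in> ({1}::nat set) \<and> j \<in> ({1,2,3}::nat set) \<and> j < i} = 1" unfolding eq by simp
qed

lemma sd16: "symd {1} {1,2,3} = {2,3}" unfolding symd_def by auto

lemma bs17: "bsign {2} {} = 1"
  unfolding bsign_def
proof -
  have eq: "{(i, j). i \<in> ({2}::nat set) \<and> j \<in> ({}::nat set) \<and> j < i} = {}" by auto
  show "(-1::real) ^ card {(i, j). i \<in> ({2}::nat set) \<and> j \<in> ({}::nat set) \<and> j < i} = 1" unfolding eq by simp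
qed

lemma sd17: "symd {2} {} = {2}" unfolding symd_def by auto

lemma bs18: "bsign {2} {1} = -1"
  unfolding bsign_def
proof -
  have eq: "{(i, j). i \<in> ({2}::nat set) \<and> j \<in> ({1}::nat set) \<and> j < i} = {(2,1)}" by auto
  show "(-1::real) ^ card {(i, j). i \<in> ({2}::nat set) \<and> j \<in> ({1}::nat set) \<and> j < i} = -1" unfolding eq by simp
qed

lemma sd18: "symd {2} {1} = {1,2}" unfolding symd_def by auto

lemma bs19: "bsign {2} {2} = 1"
  unfolding bsign_def
proof -
  have eq: "{(i, j). i \<in> ({2}::nat set) \<and> j \<in> ({2}::nat set) \<and> j < i} = {}" by auto
  show "(-1::real) ^ card {(i, j). i \<in> ({2}::nat set) \<and> j \<in> ({2}::nat set) \<and> j < i} = 1" unfolding eq by simp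
qed

lemma sd19: "symd {2} {2} = {}" unfolding symd_def by auto

lemma bs20: "bsign {2} {3} = 1"
  unfolding bsign_def
proof -
  have eq: "{(i, j). i \<in> ({2}::nat set) \<and> j \<in> ({3}::nat set) \<and> j < i} = {}" by auto
  show "(-1::real) ^ card {(i, j). i \<in> ({2}::nat set) \<and> j \<in> ({3}::nat set) \<and> j < i} = 1" unfolding eq by simp
qed

lemma sd20: "symd {2} {3} = {2,3}" unfolding symd_def by auto

lemma bs21: "bsign {2} {1,2} = -1"
  unfolding bsign_def
proof -
  have eq: "{(i, j). i \<in> ({2}::nat set) \<and> j \<in> ({1,2}::nat set) \<and> j < i} = {(2,1)}" by auto
  show "(-1::real) ^ card {(i, j). i \<in> ({2}::nat set) \<and> j \<in> ({1,2}::nat set) \<and> j < i} = -1" unfolding eq by simp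
qed

lemma sd21: "symd {2} {1,2} = {1}" unfolding symd_def by auto

lemma bs22: "bsign {2} {1,3} = -1"
  unfolding bsign_def
proof -
  have eq: "{(i, j). i \<in> ({2}::nat set) \<and> j \<in> ({1,3}::nat set) \<and> j < i} = {(2,1)}" by auto
  show "(-1::real) ^ card {(i, j). i \<in> ({2}::nat set) \<and> j \<in> ({1,3}::nat set) \<and> j < i} = -1" unfolding eq by simp
qed

lemma sd22: "symd {2} {1,3} = {1,2,3}" unfolding symd_def by auto

lemma bs23: "bsign {2} {2,3} = 1"
  unfolding bsign_def
proof -
  have eq: "{(i, j). i \<in> ({2}::nat set) \<and> j \<in> ({2,3}::nat set) \<and> j < i} = {}" by auto
  show "(-1::real) ^ card {(i, j). i \<in> ({2}::nat set) \<and> j \<in> ({2,3}::nat set) \<and> j < i} = 1" unfolding eq by simp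
qed

lemma sd23: "symd {2} {2,3} = {3}" unfolding symd_def by auto

lemma bs24: "bsign {2} {1,2,3} = -1"
  unfolding bsign_def
proof -
  have eq: "{(i, j). i \<in> ({2}::nat set) \<and> j \<in> ({1,2,3}::nat set) \<and> j < i} = {(2,1)}" by auto
  show "(-1::real) ^ card {(i, j). i \<in> ({2}::nat set) \<and> j \<in> ({1,2,3}::nat set) \<and> j < i} = -1" unfolding eq by simp
qed

lemma sd24: "symd {2} {1,2,3} = {1,3}" unfolding symd_def by auto

lemma bs25: "bsign {3} {} = 1"
  unfolding bsign_def
proof -
  have eq: "{(i, j). i \<in> ({3}::nat set) \<and> j \<in> ({}::nat set) \<and> j < i} = {}" by auto
  show "(-1::real) ^ card {(i, j). i \<in> ({3}::nat set) \<and> j \<in> ({}::nat set) \<and> j < i} = 1" unfolding eq by simp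
qed

lemma sd25: "symd {3} {} = {3}" unfolding symd_def by auto

lemma bs26: "bsign {3} {1} = -1"
  unfolding bsign_def
proof -
  have eq: "{(i, j). i \<in> ({3}::nat set) \<and> j \<in> ({1}::nat set) \<and> j < i} = {(3,1)}" by auto
  show "(-1::real) ^ card {(i, j). i \<in> ({3}::nat set) \<and> j \<in> ({1}::nat set) \<and> j < i} = -1" unfolding eq by simp
qed

lemma sd26: "symd {3} {1} = {1,3}" unfolding symd_def by auto

lemma bs27: "bsign {3} {2} = -1"
  unfolding bsign_def
proof -
  have eq: "{(i, j). i \<in> ({3}::nat set) \<and> j \<in> ({2}::nat set) \<and> j < i} = {(3,2)}" by auto
  show "(-1::real) ^ card {(i, j). i \<in> ({3}::nat set) \<and> j \<in> ({2}::nat set) \<and> j < i} = -1" unfolding eq by simp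
qed

lemma sd27: "symd {3} {2} = {2,3}" unfolding symd_def by auto

lemma bs28: "bsign {3} {3} = 1"
  unfolding bsign_def
proof -
  have eq: "{(i, j). i \<in> ({3}::nat set) \<and> j \<in> ({3}::nat set) \<and> j < i} = {}" by auto
  show "(-1::real) ^ card {(i, j). i \<in> ({3}::nat set) \<and> j \<in> ({3}::nat set) \<and> j < i} = 1" unfolding eq by simp
qed

lemma sd28: "symd {3} {3} = {}" unfolding symd_def by auto

lemma bs29: "bsign {3} {1,2} = 1"
  unfolding bsign_def
proof -
  have eq: "{(i, j). i \<in> ({3}::nat set) \<and> j \<in> ({1,2}::nat set) \<and> j < i} = {(3,1),(3,2)}" by auto
  show "(-1::real) ^ card {(i, j). i \<in> ({3}::nat set) \<and> j \<in> ({1,2}::nat set) \<and> j < i} = 1" unfolding eq by simp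
qed

lemma sd29: "symd {3} {1,2} = {1,2,3}" unfolding symd_def by auto

lemma bs30: "bsign {3} {1,3} = -1"
  unfolding bsign_def
proof -
  have eq: "{(i, j). i \<in> ({3}::nat set) \<and> j \<in> ({1,3}::nat set) \<and> j < i} = {(3,1)}" by auto
  show "(-1::real) ^ card {(i, j). i \<in> ({3}::nat set) \<and> j \<in> ({1,3}::nat set) \<and> j < i} = -1" unfolding eq by simp
qed

lemma sd30: "symd {3} {1,3} = {1}" unfolding symd_def by auto

lemma bs31: "bsign {3} {2,3} = -1"
  unfolding bsign_def
proof -
  have eq: "{(i, j). i \<in> ({3}::nat set) \<and> j \<in> ({2,3}::nat set) \<and> j < i} = {(3,2)}" by auto
  show "(-1::real) ^ card {(i, j). i \<in> ({3}::nat set) \<and> j \<in> ({2,3}::nat set) \<and> j < i} = -1" unfolding eq by simp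
qed

lemma sd31: "symd {3} {2,3} = {2}" unfolding symd_def by auto

lemma bs32: "bsign {3} {1,2,3} = 1"
  unfolding bsign_def
proof -
  have eq: "{(i, j). i \<in> ({3}::nat set) \<and> j \<in> ({1,2,3}::nat set) \<and> j < i} = {(3,1),(3,2)}" by auto
  show "(-1::real) ^ card {(i, j). i \<in> ({3}::nat set) \<and> j \<in> ({1,2,3}::nat set) \<and> j < i} = 1" unfolding eq by simp
qed

lemma sd32: "symd {3} {1,2,3} = {1,2}" unfolding symd_def by auto

lemma bs33: "bsign {1,2} {} = 1"
  unfolding bsign_def
proof -
  have eq: "{(i, j). i \<in> ({1,2}::nat set) \<and> j \<in> ({}::nat set) \<and> j < i} = {}" by auto
  show "(-1::real) ^ card {(i, j). i \<in> ({1,2}::nat set) \<and> j \<in> ({}::nat set) \<and> j < i} = 1" unfolding eq by simp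
qed

lemma sd33: "symd {1,2} {} = {1,2}" unfolding symd_def by auto

lemma bs34: "bsign {1,2} {1} = -1"
  unfolding bsign_def
proof -
  have eq: "{(i, j). i \<in> ({1,2}::nat set) \<and> j \<in> ({1}::nat set) \<and> j < i} = {(2,1)}" by auto
  show "(-1::real) ^ card {(i, j). i \<in> ({1,2}::nat set) \<and> j \<in> ({1}::nat set) \<and> j < i} = -1" unfolding eq by simp
qed

lemma sd34: "symd {1,2} {1} = {2}" unfolding symd_def by auto

lemma bs35: "bsign {1,2} {2} = 1"
  unfolding bsign_def
proof -
  have eq: "{(i, j). i \<in> ({1,2}::nat set) \<and> j \<in> ({2}::nat set) \<and> j < i} = {}" by auto
  show "(-1::real) ^ card {(i, j). i \<in> ({1,2}::nat set) \<and> j \<in> ({2}::nat set) \<and> j < i} = 1" unfolding eq by simp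
qed

lemma sd35: "symd {1,2} {2} = {1}" unfolding symd_def by auto

lemma bs36: "bsign {1,2} {3} = 1"
  unfolding bsign_def
proof -
  have eq: "{(i, j). i \<in> ({1,2}::nat set) \<and> j \<in> ({3}::nat set) \<and> j < i} = {}" by auto
  show "(-1::real) ^ card {(i, j). i \<in> ({1,2}::nat set) \<and> j \<in> ({3}::nat set) \<and> j < i} = 1" unfolding eq by simp
qed

lemma sd36: "symd {1,2} {3} = {1,2,3}" unfolding symd_def by auto

lemma bs37: "bsign {1,2} {1,2} = -1"
  unfolding bsign_def
proof -
  have eq: "{(i, j). i \<in> ({1,2}::nat set) \<and> j \<in> ({1,2}::nat set) \<and> j < i} = {(2,1)}" by auto
  show "(-1::real) ^ card {(i, j). i \<in> ({1,2}::nat set) \<and> j \<in> ({1,2}::nat set) \<and> j < i} = -1" unfolding eq by simp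
qed

lemma sd37: "symd {1,2} {1,2} = {}" unfolding symd_def by auto

lemma bs38: "bsign {1,2} {1,3} = -1"
  unfolding bsign_def
proof -
  have eq: "{(i, j). i \<in> ({1,2}::nat set) \<and> j \<in> ({1,3}::nat set) \<and> j < i} = {(2,1)}" by auto
  show "(-1::real) ^ card {(i, j). i \<in> ({1,2}::nat set) \<and> j \<in> ({1,3}::nat set) \<and> j < i} = -1" unfolding eq by simp
qed

lemma sd38: "symd {1,2} {1,3} = {2,3}" unfolding symd_def by auto

lemma bs39: "bsign {1,2} {2,3} = 1"
  unfolding bsign_def
proof -
  have eq: "{(i, j). i \<in> ({1,2}::nat set) \<and> j \<in> ({2,3}::nat set) \<and> j < i} = {}" by auto
  show "(-1::real) ^ card {(i, j). i \<in> ({1,2}::nat set) \<and> j \<in> ({2,3}::nat set) \<and> j < i} = 1" unfolding eq by simp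
qed

lemma sd39: "symd {1,2} {2,3} = {1,3}" unfolding symd_def by auto

lemma bs40: "bsign {1,2} {1,2,3} = -1"
  unfolding bsign_def
proof -
  have eq: "{(i, j). i \<in> ({1,2}::nat set) \<and> j \<in> ({1,2,3}::nat set) \<and> j < i} = {(2,1)}" by auto
  show "(-1::real) ^ card {(i, j). i \<in> ({1,2}::nat set) \<and> j \<in> ({1,2,3}::nat set) \<and> j < i} = -1" unfolding eq by simp
qed

lemma sd40: "symd {1,2} {1,2,3} = {3}" unfolding symd_def by auto

lemma bs41: "bsign {1,3} {} = 1"
  unfolding bsign_def
proof -
  have eq: "{(i, j). i \<in> ({1,3}::nat set) \<and> j \<in> ({}::nat set) \<and> j < i} = {}" by auto
  show "(-1::real) ^ card {(i, j). i \<in> ({1,3}::nat set) \<and> j \<in> ({}::nat set) \<and> j < i} = 1" unfolding eq by simp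
qed

lemma sd41: "symd {1,3} {} = {1,3}" unfolding symd_def by auto

lemma bs42: "bsign {1,3} {1} = -1"
  unfolding bsign_def
proof -
  have eq: "{(i, j). i \<in> ({1,3}::nat set) \<and> j \<in> ({1}::nat set) \<and> j < i} = {(3,1)}" by auto
  show "(-1::real) ^ card {(i, j). i \<in> ({1,3}::nat set) \<and> j \<in> ({1}::nat set) \<and> j < i} = -1" unfolding eq by simp
qed

lemma sd42: "symd {1,3} {1} = {3}" unfolding symd_def by auto

lemma bs43: "bsign {1,3} {2} = -1"
  unfolding bsign_def
proof -
  have eq: "{(i, j). i \<in> ({1,3}::nat set) \<and> j \<in> ({2}::nat set) \<and> j < i} = {(3,2)}" by auto
  show "(-1::real) ^ card {(i, j). i \<in> ({1,3}::nat set) \<and> j \<in> ({2}::nat set) \<and> j < i} = -1" unfolding eq by simp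
qed

lemma sd43: "symd {1,3} {2} = {1,2,3}" unfolding symd_def by auto

lemma bs44: "bsign {1,3} {3} = 1"
  unfolding bsign_def
proof -
  have eq: "{(i, j). i \<in> ({1,3}::nat set) \<and> j \<in> ({3}::nat set) \<and> j < i} = {}" by auto
  show "(-1::real) ^ card {(i, j). i \<in> ({1,3}::nat set) \<and> j \<in> ({3}::nat set) \<and> j < i} = 1" unfolding eq by simp
qed

lemma sd44: "symd {1,3} {3} = {1}" unfolding symd_def by auto

lemma bs45: "bsign {1,3} {1,2} = 1"
  unfolding bsign_def
proof -
  have eq: "{(i, j). i \<in> ({1,3}::nat set) \<and> j \<in> ({1,2}::nat set) \<and> j < i} = {(3,1),(3,2)}" by auto
  show "(-1::real) ^ card {(i, j). i \<in> ({1,3}::nat set) \<and> j \<in> ({1,2}::nat set) \<and> j < i} = 1" unfolding eq by simp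
qed

lemma sd45: "symd {1,3} {1,2} = {2,3}" unfolding symd_def by auto

lemma bs46: "bsign {1,3} {1,3} = -1"
  unfolding bsign_def
proof -
  have eq: "{(i, j). i \<in> ({1,3}::nat set) \<and> j \<in> ({1,3}::nat set) \<and> j < i} = {(3,1)}" by auto
  show "(-1::real) ^ card {(i, j). i \<in> ({1,3}::nat set) \<and> j \<in> ({1,3}::nat set) \<and> j < i} = -1" unfolding eq by simp
qed

lemma sd46: "symd {1,3} {1,3} = {}" unfolding symd_def by auto

lemma bs47: "bsign {1,3} {2,3} = -1"
  unfolding bsign_def
proof -
  have eq: "{(i, j). i \<in> ({1,3}::nat set) \<and> j \<in> ({2,3}::nat set) \<and> j < i} = {(3,2)}" by auto
  show "(-1::real) ^ card {(i, j). i \<in> ({1,3}::nat set) \<and> j \<in> ({2,3}::nat set) \<and> j < i} = -1" unfolding eq by simp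
qed

lemma sd47: "symd {1,3} {2,3} = {1,2}" unfolding symd_def by auto

lemma bs48: "bsign {1,3} {1,2,3} = 1"
  unfolding bsign_def
proof -
  have eq: "{(i, j). i \<in> ({1,3}::nat set) \<and> j \<in> ({1,2,3}::nat set) \<and> j < i} = {(3,1),(3,2)}" by auto
  show "(-1::real) ^ card {(i, j). i \<in> ({1,3}::nat set) \<and> j \<in> ({1,2,3}::nat set) \<and> j < i} = 1" unfolding eq by simp
qed

lemma sd48: "symd {1,3} {1,2,3} = {2}" unfolding symd_def by auto

lemma bs49: "bsign {2,3} {} = 1"
  unfolding bsign_def
proof -
  have eq: "{(i, j). i \<in> ({2,3}::nat set) \<and> j \<in> ({}::nat set) \<and> j < i} = {}" by auto
  show "(-1::real) ^ card {(i, j). i \<in> ({2,3}::nat set) \<and> j \<in> ({}::nat set) \<and> j < i} = 1" unfolding eq by simp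
qed

lemma sd49: "symd {2,3} {} = {2,3}" unfolding symd_def by auto

lemma bs50: "bsign {2,3} {1} = 1"
  unfolding bsign_def
proof -
  have eq: "{(i, j). i \<in> ({2,3}::nat set) \<and> j \<in> ({1}::nat set) \<and> j < i} = {(2,1),(3,1)}" by auto
  show "(-1::real) ^ card {(i, j). i \<in> ({2,3}::nat set) \<and> j \<in> ({1}::nat set) \<and> j < i} = 1" unfolding eq by simp
qed

lemma sd50: "symd {2,3} {1} = {1,2,3}" unfolding symd_def by auto

lemma bs51: "bsign {2,3} {2} = -1"
  unfolding bsign_def
proof -
  have eq: "{(i, j). i \<in> ({2,3}::nat set) \<and> j \<in> ({2}::nat set) \<and> j < i} = {(3,2)}" by auto
  show "(-1::real) ^ card {(i, j). i \<in> ({2,3}::nat set) \<and> j \<in> ({2}::nat set) \<and> j < i} = -1" unfolding eq by simp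
qed

lemma sd51: "symd {2,3} {2} = {3}" unfolding symd_def by auto

lemma bs52: "bsign {2,3} {3} = 1"
  unfolding bsign_def
proof -
  have eq: "{(i, j). i \<in> ({2,3}::nat set) \<and> j \<in> ({3}::nat set) \<and> j < i} = {}" by auto
  show "(-1::real) ^ card {(i, j). i \<in> ({2,3}::nat set) \<and> j \<in> ({3}::nat set) \<and> j < i} = 1" unfolding eq by simp
qed

lemma sd52: "symd {2,3} {3} = {2}" unfolding symd_def by auto

lemma bs53: "bsign {2,3} {1,2} = -1"
  unfolding bsign_def
proof -
  have eq: "{(i, j). i \<in> ({2,3}::nat set) \<and> j \<in> ({1,2}::nat set) \<and> j < i} = {(2,1),(3,1),(3,2)}" by auto
  show "(-1::real) ^ card {(i, j). i \<in> ({2,3}::nat set) \<and> j \<in> ({1,2}::nat set) \<and> j < i} = -1" unfolding eq by simp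
qed

lemma sd53: "symd {2,3} {1,2} = {1,3}" unfolding symd_def by auto

lemma bs54: "bsign {2,3} {1,3} = 1"
  unfolding bsign_def
proof -
  have eq: "{(i, j). i \<in> ({2,3}::nat set) \<and> j \<in> ({1,3}::nat set) \<and> j < i} = {(2,1),(3,1)}" by auto
  show "(-1::real) ^ card {(i, j). i \<in> ({2,3}::nat set) \<and> j \<in> ({1,3}::nat set) \<and> j < i} = 1" unfolding eq by simp
qed

lemma sd54: "symd {2,3} {1,3} = {1,2}" unfolding symd_def by auto

lemma bs55: "bsign {2,3} {2,3} = -1"
  unfolding bsign_def
proof -
  have eq: "{(i, j). i \<in> ({2,3}::nat set) \<and> j \<in> ({2,3}::nat set) \<and> j < i} = {(3,2)}" by auto
  show "(-1::real) ^ card {(i, j). i \<in> ({2,3}::nat set) \<and> j \<in> ({2,3}::nat set) \<and> j < i} = -1" unfolding eq by simp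
qed

lemma sd55: "symd {2,3} {2,3} = {}" unfolding symd_def by auto

lemma bs56: "bsign {2,3} {1,2,3} = -1"
  unfolding bsign_def
proof -
  have eq: "{(i, j). i \<in> ({2,3}::nat set) \<and> j \<in> ({1,2,3}::nat set) \<and> j < i} = {(2,1),(3,1),(3,2)}" by auto
  show "(-1::real) ^ card {(i, j). i \<in> ({2,3}::nat set) \<and> j \<in> ({1,2,3}::nat set) \<and> j < i} = -1" unfolding eq by simp
qed

lemma sd56: "symd {2,3} {1,2,3} = {1}" unfolding symd_def by auto

lemma bs57: "bsign {1,2,3} {} = 1"
  unfolding bsign_def
proof -
  have eq: "{(i, j). i \<in> ({1,2,3}::nat set) \<and> j \<in> ({}::nat set) \<and> j < i} = {}" by auto
  show "(-1::real) ^ card {(i, j). i \<in> ({1,2,3}::nat set) \<and> j \<in> ({}::nat set) \<and> j < i} = 1" unfolding eq by simp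
qed

lemma sd57: "symd {1,2,3} {} = {1,2,3}" unfolding symd_def by auto

lemma bs58: "bsign {1,2,3} {1} = 1"
  unfolding bsign_def
proof -
  have eq: "{(i, j). i \<in> ({1,2,3}::nat set) \<and> j \<in> ({1}::nat set) \<and> j < i} = {(2,1),(3,1)}" by auto
  show "(-1::real) ^ card {(i, j). i \<in> ({1,2,3}::nat set) \<and> j \<in> ({1}::nat set) \<and> j < i} = 1" unfolding eq by simp
qed

lemma sd58: "symd {1,2,3} {1} = {2,3}" unfolding symd_def by auto

lemma bs59: "bsign {1,2,3} {2} = -1"
  unfolding bsign_def
proof -
  have eq: "{(i, j). i \<in> ({1,2,3}::nat set) \<and> j \<in> ({2}::nat set) \<and> j < i} = {(3,2)}" by auto
  show "(-1::real) ^ card {(i, j). i \<in> ({1,2,3}::nat set) \<and> j \<in> ({2}::nat set) \<and> j < i} = -1" unfolding eq by simp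
qed

lemma sd59: "symd {1,2,3} {2} = {1,3}" unfolding symd_def by auto

lemma bs60: "bsign {1,2,3} {3} = 1"
  unfolding bsign_def
proof -
  have eq: "{(i, j). i \<in> ({1,2,3}::nat set) \<and> j \<in> ({3}::nat set) \<and> j < i} = {}" by auto
  show "(-1::real) ^ card {(i, j). i \<in> ({1,2,3}::nat set) \<and> j \<in> ({3}::nat set) \<and> j < i} = 1" unfolding eq by simp
qed

lemma sd60: "symd {1,2,3} {3} = {1,2}" unfolding symd_def by auto

lemma bs61: "bsign {1,2,3} {1,2} = -1"
  unfolding bsign_def
proof -
  have eq: "{(i, j). i \<in> ({1,2,3}::nat set) \<and> j \<in> ({1,2}::nat set) \<and> j < i} = {(2,1),(3,1),(3,2)}" by auto
  show "(-1::real) ^ card {(i, j). i \<in> ({1,2,3}::nat set) \<and> j \<in> ({1,2}::nat set) \<and> j < i} = -1" unfolding eq by simp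
qed

lemma sd61: "symd {1,2,3} {1,2} = {3}" unfolding symd_def by auto

lemma bs62: "bsign {1,2,3} {1,3} = 1"
  unfolding bsign_def
proof -
  have eq: "{(i, j). i \<in> ({1,2,3}::nat set) \<and> j \<in> ({1,3}::nat set) \<and> j < i} = {(2,1),(3,1)}" by auto
  show "(-1::real) ^ card {(i, j). i \<in> ({1,2,3}::nat set) \<and> j \<in> ({1,3}::nat set) \<and> j < i} = 1" unfolding eq by simp
qed

lemma sd62: "symd {1,2,3} {1,3} = {2}" unfolding symd_def by auto

lemma bs63: "bsign {1,2,3} {2,3} = -1"
  unfolding bsign_def
proof -
  have eq: "{(i, j). i \<in> ({1,2,3}::nat set) \<and> j \<in> ({2,3}::nat set) \<and> j < i} = {(3,2)}" by auto
  show "(-1::real) ^ card {(i, j). i \<in> ({1,2,3}::nat set) \<and> j \<in> ({2,3}::nat set) \<and> j < i} = -1" unfolding eq by simp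
qed

lemma sd63: "symd {1,2,3} {2,3} = {1}" unfolding symd_def by auto

lemma bs64: "bsign {1,2,3} {1,2,3} = -1"
  unfolding bsign_def
proof -
  have eq: "{(i, j). i \<in> ({1,2,3}::nat set) \<and> j \<in> ({1,2,3}::nat set) \<and> j < i} = {(2,1),(3,1),(3,2)}" by auto
  show "(-1::real) ^ card {(i, j). i \<in> ({1,2,3}::nat set) \<and> j \<in> ({1,2,3}::nat set) \<and> j < i} = -1" unfolding eq by simp
qed

lemma sd64: "symd {1,2,3} {1,2,3} = {}" unfolding symd_def by auto

lemmas bsigns = bs1 bs2 bs3 bs4 bs5 bs6 bs7 bs8 bs9 bs10 bs11 bs12 bs13 bs14 bs15 bs16 bs17 bs18 bs19 bs20 bs21 bs22 bs23 bs24 bs25 bs26 bs27 bs28 bs29 bs30 bs31 bs32 bs33 bs34 bs35 bs36 bs37 bs38 bs39 bs40 bs41 bs42 bs43 bs44 bs45 bs46 bs47 bs48 bs49 bs50 bs51 bs52 bs53 bs54 bs55 bs56 bs57 bs58 bs59 bs60 bs61 bs62 bs63 bs64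

lemmas sds = sd1 sd2 sd3 sd4 sd5 sd6 sd7 sd8 sd9 sd10 sd11 sd12 sd13 sd14 sd15 sd16 sd17 sd18 sd19 sd20 sd21 sd22 sd23 sd24 sd25 sd26 sd27 sd28 sd29 sd30 sd31 sd32 sd33 sd34 sd35 sd36 sd37 sd38 sd39 sd40 sd41 sd42 sd43 sd44 sd45 sd46 sd47 sd48 sd49 sd50 sd51 sd52 sd53 sd54 sd55 sd56 sd57 sd58 sd59 sd60 sd61 sd62 sd63 sd64

lemma dn1: "({}::nat set) \<noteq> {1}"
proof
  assume "({}::nat set) = {1}"
  then have "((1::nat) \<in> ({}::nat set)) = (1 \<in> ({1}::nat set))" by simp
  then show False by simp
qed

lemma dn2: "({}::nat set) \<noteq> {2}"
proof
  assume "({}::nat set) = {2}"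
  then have "((2::nat) \<in> ({}::nat set)) = (2 \<in> ({2}::nat set))" by simp
  then show False by simp
qed

lemma dn3: "({}::nat set) \<noteq> {3}"
proof
  assume "({}::nat set) = {3}"
  then have "((3::nat) \<in> ({}::nat set)) = (3 \<in> ({3}::nat set))" by simp
  then show False by simp
qed

lemma dn4: "({}::nat set) \<noteq> {1,2}"
proof
  assume "({}::nat set) = {1,2}"
  then have "((1::nat) \<in> ({}::nat set)) = (1 \<in> ({1,2}::nat set))" by simp
  then show False by simp
qed

lemma dn5: "({}::nat set) \<noteq> {1,3}"
proof
  assume "({}::nat set) = {1,3}"
  then have "((1::nat) \<in> ({}::nat set)) = (1 \<in> ({1,3}::nat set))" by simp
  then show False by simp
qed

lemma dn6: "({}::nat set) \<noteq> {2,3}"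
proof
  assume "({}::nat set) = {2,3}"
  then have "((2::nat) \<in> ({}::nat set)) = (2 \<in> ({2,3}::nat set))" by simp
  then show False by simp
qed

lemma dn7: "({}::nat set) \<noteq> {1,2,3}"
proof
  assume "({}::nat set) = {1,2,3}"
  then have "((1::nat) \<in> ({}::nat set)) = (1 \<in> ({1,2,3}::nat set))" by simp
  then show False by simp
qed

lemma dn8: "({1}::nat set) \<noteq> {}"
proof
  assume "({1}::nat set) = {}"
  then have "((1::nat) \<in> ({1}::nat set)) = (1 \<in> ({}::nat set))" by simp
  then show False by simp
qed

lemma dn9: "({1}::nat set) \<noteq> {2}"
proof
  assume "({1}::nat set) = {2}"
  then have "((1::nat) \<in> ({1}::nat set)) = (1 \<in> ({2}::nat set))" by simp
  then show False by simp
qed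

lemma dn10: "({1}::nat set) \<noteq> {3}"
proof
  assume "({1}::nat set) = {3}"
  then have "((1::nat) \<in> ({1}::nat set)) = (1 \<in> ({3}::nat set))" by simp
  then show False by simp
qed

lemma dn11: "({1}::nat set) \<noteq> {1,2}"
proof
  assume "({1}::nat set) = {1,2}"
  then have "((2::nat) \<in> ({1}::nat set)) = (2 \<in> ({1,2}::nat set))" by simp
  then show False by simp
qed

lemma dn12: "({1}::nat set) \<noteq> {1,3}"
proof
  assume "({1}::nat set) = {1,3}"
  then have "((3::nat) \<in> ({1}::nat set)) = (3 \<in> ({1,3}::nat set))" by simp
  then show False by simp
qed

lemma dn13: "({1}::nat set) \<noteq> {2,3}"
proof
  assume "({1}::nat set) = {2,3}"
  then have "((1::nat) \<in> ({1}::nat set)) = (1 \<in> ({2,3}::nat set))" by simp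
  then show False by simp
qed

lemma dn14: "({1}::nat set) \<noteq> {1,2,3}"
proof
  assume "({1}::nat set) = {1,2,3}"
  then have "((2::nat) \<in> ({1}::nat set)) = (2 \<in> ({1,2,3}::nat set))" by simp
  then show False by simp
qed

lemma dn15: "({2}::nat set) \<noteq> {}"
proof
  assume "({2}::nat set) = {}"
  then have "((2::nat) \<in> ({2}::nat set)) = (2 \<in> ({}::nat set))" by simp
  then show False by simp
qed

lemma dn16: "({2}::nat set) \<noteq> {1}"
proof
  assume "({2}::nat set) = {1}"
  then have "((1::nat) \<in> ({2}::nat set)) = (1 \<in> ({1}::nat set))" by simp
  then show False by simp
qed

lemma dn17: "({2}::nat set) \<noteq> {3}"
proof
  assume "({2}::nat set) = {3}"
  then have "((2::nat) \<in> ({2}::nat set)) = (2 \<in> ({3}::nat set))" by simp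
  then show False by simp
qed

lemma dn18: "({2}::nat set) \<noteq> {1,2}"
proof
  assume "({2}::nat set) = {1,2}"
  then have "((1::nat) \<in> ({2}::nat set)) = (1 \<in> ({1,2}::nat set))" by simp
  then show False by simp
qed

lemma dn19: "({2}::nat set) \<noteq> {1,3}"
proof
  assume "({2}::nat set) = {1,3}"
  then have "((1::nat) \<in> ({2}::nat set)) = (1 \<in> ({1,3}::nat set))" by simp
  then show False by simp
qed

lemma dn20: "({2}::nat set) \<noteq> {2,3}"
proof
  assume "({2}::nat set) = {2,3}"
  then have "((3::nat) \<in> ({2}::nat set)) = (3 \<in> ({2,3}::nat set))" by simp
  then show False by simp
qed

lemma dn21: "({2}::nat set) \<noteq> {1,2,3}"
proof
  assume "({2}::nat set) = {1,2,3}"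
  then have "((1::nat) \<in> ({2}::nat set)) = (1 \<in> ({1,2,3}::nat set))" by simp
  then show False by simp
qed

lemma dn22: "({3}::nat set) \<noteq> {}"
proof
  assume "({3}::nat set) = {}"
  then have "((3::nat) \<in> ({3}::nat set)) = (3 \<in> ({}::nat set))" by simp
  then show False by simp
qed

lemma dn23: "({3}::nat set) \<noteq> {1}"
proof
  assume "({3}::nat set) = {1}"
  then have "((1::nat) \<in> ({3}::nat set)) = (1 \<in> ({1}::nat set))" by simp
  then show False by simp
qed

lemma dn24: "({3}::nat set) \<noteq> {2}"
proof
  assume "({3}::nat set) = {2}"
  then have "((2::nat) \<in> ({3}::nat set)) = (2 \<in> ({2}::nat set))" by simp
  then show False by simp
qed

lemma dn25: "({3}::nat set) \<noteq> {1,2}"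
proof
  assume "({3}::nat set) = {1,2}"
  then have "((1::nat) \<in> ({3}::nat set)) = (1 \<in> ({1,2}::nat set))" by simp
  then show False by simp
qed

lemma dn26: "({3}::nat set) \<noteq> {1,3}"
proof
  assume "({3}::nat set) = {1,3}"
  then have "((1::nat) \<in> ({3}::nat set)) = (1 \<in> ({1,3}::nat set))" by simp
  then show False by simp
qed

lemma dn27: "({3}::nat set) \<noteq> {2,3}"
proof
  assume "({3}::nat set) = {2,3}"
  then have "((2::nat) \<in> ({3}::nat set)) = (2 \<in> ({2,3}::nat set))" by simp
  then show False by simp
qed

lemma dn28: "({3}::nat set) \<noteq> {1,2,3}"
proof
  assume "({3}::nat set) = {1,2,3}"
  then have "((1::nat) \<in> ({3}::nat set)) = (1 \<in> ({1,2,3}::nat set))" by simp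
  then show False by simp
qed

lemma dn29: "({1,2}::nat set) \<noteq> {}"
proof
  assume "({1,2}::nat set) = {}"
  then have "((1::nat) \<in> ({1,2}::nat set)) = (1 \<in> ({}::nat set))" by simp
  then show False by simp
qed

lemma dn30: "({1,2}::nat set) \<noteq> {1}"
proof
  assume "({1,2}::nat set) = {1}"
  then have "((2::nat) \<in> ({1,2}::nat set)) = (2 \<in> ({1}::nat set))" by simp
  then show False by simp
qed

lemma dn31: "({1,2}::nat set) \<noteq> {2}"
proof
  assume "({1,2}::nat set) = {2}"
  then have "((1::nat) \<in> ({1,2}::nat set)) = (1 \<in> ({2}::nat set))" by simp
  then show False by simp
qed

lemma dn32: "({1,2}::nat set) \<noteq> {3}"
proof
  assume "({1,2}::nat set) = {3}"
  then have "((1::nat) \<in> ({1,2}::nat set)) = (1 \<in> ({3}::nat set))" by simp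
  then show False by simp
qed

lemma dn33: "({1,2}::nat set) \<noteq> {1,3}"
proof
  assume "({1,2}::nat set) = {1,3}"
  then have "((2::nat) \<in> ({1,2}::nat set)) = (2 \<in> ({1,3}::nat set))" by simp
  then show False by simp
qed

lemma dn34: "({1,2}::nat set) \<noteq> {2,3}"
proof
  assume "({1,2}::nat set) = {2,3}"
  then have "((1::nat) \<in> ({1,2}::nat set)) = (1 \<in> ({2,3}::nat set))" by simp
  then show False by simp
qed

lemma dn35: "({1,2}::nat set) \<noteq> {1,2,3}"
proof
  assume "({1,2}::nat set) = {1,2,3}"
  then have "((3::nat) \<in> ({1,2}::nat set)) = (3 \<in> ({1,2,3}::nat set))" by simp
  then show False by simp
qed

lemma dn36: "({1,3}::nat set) \<noteq> {}"
proof
  assume "({1,3}::nat set) = {}"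
  then have "((1::nat) \<in> ({1,3}::nat set)) = (1 \<in> ({}::nat set))" by simp
  then show False by simp
qed

lemma dn37: "({1,3}::nat set) \<noteq> {1}"
proof
  assume "({1,3}::nat set) = {1}"
  then have "((3::nat) \<in> ({1,3}::nat set)) = (3 \<in> ({1}::nat set))" by simp
  then show False by simp
qed

lemma dn38: "({1,3}::nat set) \<noteq> {2}"
proof
  assume "({1,3}::nat set) = {2}"
  then have "((1::nat) \<in> ({1,3}::nat set)) = (1 \<in> ({2}::nat set))" by simp
  then show False by simp
qed

lemma dn39: "({1,3}::nat set) \<noteq> {3}"
proof
  assume "({1,3}::nat set) = {3}"
  then have "((1::nat) \<in> ({1,3}::nat set)) = (1 \<in> ({3}::nat set))" by simp
  then show False by simp
qed

lemma dn40: "({1,3}::nat set) \<noteq> {1,2}"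
proof
  assume "({1,3}::nat set) = {1,2}"
  then have "((2::nat) \<in> ({1,3}::nat set)) = (2 \<in> ({1,2}::nat set))" by simp
  then show False by simp
qed

lemma dn41: "({1,3}::nat set) \<noteq> {2,3}"
proof
  assume "({1,3}::nat set) = {2,3}"
  then have "((1::nat) \<in> ({1,3}::nat set)) = (1 \<in> ({2,3}::nat set))" by simp
  then show False by simp
qed

lemma dn42: "({1,3}::nat set) \<noteq> {1,2,3}"
proof
  assume "({1,3}::nat set) = {1,2,3}"
  then have "((2::nat) \<in> ({1,3}::nat set)) = (2 \<in> ({1,2,3}::nat set))" by simp
  then show False by simp
qed

lemma dn43: "({2,3}::nat set) \<noteq> {}"
proof
  assume "({2,3}::nat set) = {}"
  then have "((2::nat) \<in> ({2,3}::nat set)) = (2 \<in> ({}::nat set))" by simp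
  then show False by simp
qed

lemma dn44: "({2,3}::nat set) \<noteq> {1}"
proof
  assume "({2,3}::nat set) = {1}"
  then have "((1::nat) \<in> ({2,3}::nat set)) = (1 \<in> ({1}::nat set))" by simp
  then show False by simp
qed

lemma dn45: "({2,3}::nat set) \<noteq> {2}"
proof
  assume "({2,3}::nat set) = {2}"
  then have "((3::nat) \<in> ({2,3}::nat set)) = (3 \<in> ({2}::nat set))" by simp
  then show False by simp
qed

lemma dn46: "({2,3}::nat set) \<noteq> {3}"
proof
  assume "({2,3}::nat set) = {3}"
  then have "((2::nat) \<in> ({2,3}::nat set)) = (2 \<in> ({3}::nat set))" by simp
  then show False by simp
qed

lemma dn47: "({2,3}::nat set) \<noteq> {1,2}"
proof
  assume "({2,3}::nat set) = {1,2}"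
  then have "((1::nat) \<in> ({2,3}::nat set)) = (1 \<in> ({1,2}::nat set))" by simp
  then show False by simp
qed

lemma dn48: "({2,3}::nat set) \<noteq> {1,3}"
proof
  assume "({2,3}::nat set) = {1,3}"
  then have "((1::nat) \<in> ({2,3}::nat set)) = (1 \<in> ({1,3}::nat set))" by simp
  then show False by simp
qed

lemma dn49: "({2,3}::nat set) \<noteq> {1,2,3}"
proof
  assume "({2,3}::nat set) = {1,2,3}"
  then have "((1::nat) \<in> ({2,3}::nat set)) = (1 \<in> ({1,2,3}::nat set))" by simp
  then show False by simp
qed

lemma dn50: "({1,2,3}::nat set) \<noteq> {}"
proof
  assume "({1,2,3}::nat set) = {}"
  then have "((1::nat) \<in> ({1,2,3}::nat set)) = (1 \<in> ({}::nat set))" by simp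
  then show False by simp
qed

lemma dn51: "({1,2,3}::nat set) \<noteq> {1}"
proof
  assume "({1,2,3}::nat set) = {1}"
  then have "((2::nat) \<in> ({1,2,3}::nat set)) = (2 \<in> ({1}::nat set))" by simp
  then show False by simp
qed

lemma dn52: "({1,2,3}::nat set) \<noteq> {2}"
proof
  assume "({1,2,3}::nat set) = {2}"
  then have "((1::nat) \<in> ({1,2,3}::nat set)) = (1 \<in> ({2}::nat set))" by simp
  then show False by simp
qed

lemma dn53: "({1,2,3}::nat set) \<noteq> {3}"
proof
  assume "({1,2,3}::nat set) = {3}"
  then have "((1::nat) \<in> ({1,2,3}::nat set)) = (1 \<in> ({3}::nat set))" by simp
  then show False by simp
qed

lemma dn54: "({1,2,3}::nat set) \<noteq> {1,2}"
proof
  assume "({1,2,3}::nat set) = {1,2}"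
  then have "((3::nat) \<in> ({1,2,3}::nat set)) = (3 \<in> ({1,2}::nat set))" by simp
  then show False by simp
qed

lemma dn55: "({1,2,3}::nat set) \<noteq> {1,3}"
proof
  assume "({1,2,3}::nat set) = {1,3}"
  then have "((2::nat) \<in> ({1,2,3}::nat set)) = (2 \<in> ({1,3}::nat set))" by simp
  then show False by simp
qed

lemma dn56: "({1,2,3}::nat set) \<noteq> {2,3}"
proof
  assume "({1,2,3}::nat set) = {2,3}"
  then have "((1::nat) \<in> ({1,2,3}::nat set)) = (1 \<in> ({2,3}::nat set))" by simp
  then show False by simp
qed

lemmas dns = dn1 dn2 dn3 dn4 dn5 dn6 dn7 dn8 dn9 dn10 dn11 dn12 dn13 dn14 dn15 dn16 dn17 dn18 dn19 dn20 dn21 dn22 dn23 dn24 dn25 dn26 dn27 dn28 dn29 dn30 dn31 dn32 dn33 dn34 dn35 dn36 dn37 dn38 dn39 dn40 dn41 dn42 dn43 dn44 dn45 dn46 dn47 dn48 dn49 dn50 dn51 dn52 dn53 dn54 dn55 dn56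

lemma blades_eq: "blades = {{},{1},{2},{3},{1,2},{1,3},{2,3},{1,2,3}}"
  unfolding blades_def by (simp add: Pow_insert insert_commute)

definition mk :: "real \<Rightarrow> real \<Rightarrow> real \<Rightarrow> real \<Rightarrow> real \<Rightarrow> real \<Rightarrow> real \<Rightarrow> real \<Rightarrow> cl3" where
 "mk c0 c1 c2 c3 c12 c13 c23 c123 = (\<lambda>S. if S = {} then c0 else if S = {1} then c1 else if S={2} then c2
   else if S={3} then c3 else if S = {1,2} then c12 else if S={1,3} then c13 else if S={2,3} then c23
   else if S = {1,2,3} then c123 else 0)"

lemma mk_apply[simp]:
  "mk c0 c1 c2 c3 c12 c13 c23 c123 {} = c0"
  "mk c0 c1 c2 c3 c12 c13 c23 c123 {1} = c1"
  "mk c0 c1 c2 c3 c12 c13 c23 c123 {2} = c2"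
  "mk c0 c1 c2 c3 c12 c13 c23 c123 {3} = c3"
  "mk c0 c1 c2 c3 c12 c13 c23 c123 {1,2} = c12"
  "mk c0 c1 c2 c3 c12 c13 c23 c123 {1,3} = c13"
  "mk c0 c1 c2 c3 c12 c13 c23 c123 {2,3} = c23"
  "mk c0 c1 c2 c3 c12 c13 c23 c123 {1,2,3} = c123"
  by (simp_all only: mk_def dns if_True if_False simp_thms)

lemma mk_out: "S \<notin> blades \<Longrightarrow> mk c0 c1 c2 c3 c12 c13 c23 c123 S = 0"
  by (auto simp: mk_def blades_eq)

lemma sum_blades: "(\<Sum>I\<in>blades. f I) = f {} + (f {1} + (f {2} + (f {3} + (f {1,2} + (f {1,3} + (f {2,3} + f {1,2,3}))))))"
  by (simp only: blades_eq sum.insert finite_insert finite.emptyI insert_iff empty_iff dns simp_thms sum.empty add_0_right)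

lemma cmul_alt: "cmul x y S = (\<Sum>I\<in>blades. \<Sum>J\<in>blades. if symd I J = S then bsign I J * x I * y J else 0)"
  unfolding cmul_def symd_def by simp

lemma cmul_eq: "cmul x y = mk (x {} * y {} + x {1} * y {1} + x {2} * y {2} + x {3} * y {3} - x {1,2} * y {1,2} - x {1,3} * y {1,3} - x {2,3} * y {2,3} - x {1,2,3} * y {1,2,3}) (x {} * y {1} + x {1} * y {} - x {2} * y {1,2} - x {3} * y {1,3} + x {1,2} * y {2} + x {1,3} * y {3} - x {2,3} * y {1,2,3} - x {1,2,3} * y {2,3}) (x {} * y {2} + x {1} * y {1,2} + x {2} * y {} - x {3} * y {2,3} - x {1,2} * y {1} + x {1,3} * y {1,2,3} + x {2,3} * y {3} + x {1,2,3} * y {1,3}) (x {} * y {3} + x {1} * y {1,3} + x {2} * y {2,3} + x {3} * y {} - x {1,2} * y {1,2,3} - x {1,3} * y {1} - x {2,3} * y {2} - x {1,2,3} * y {1,2}) (x {} * y {1,2} + x {1} * y {2} - x {2} * y {1} + x {3} * y {1,2,3} + x {1,2} * y {} - x {1,3} * y {2,3} + x {2,3} * y {1,3} + x {1,2,3} * y {3}) (x {} * y {1,3} + x {1} * y {3} - x {2} * y {1,2,3} - x {3} * y {1} + x {1,2} * y {2,3} + x {1,3} * y {} - x {2,3} * y {1,2} - x {1,2,3} * y {2}) (x {} * y {2,3} + x {1} * y {1,2,3} + x {2} * y {3} - x {3} * y {2} - x {1,2} * y {1,3} + x {1,3} * y {1,2} + x {2,3} * y {} + x {1,2,3} * y {1})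 (x {} * y {1,2,3} + x {1} * y {2,3} - x {2} * y {1,3} + x {3} * y {1,2} + x {1,2} * y {3} - x {1,3} * y {2} + x {2,3} * y {1} + x {1,2,3} * y {})"
proof
  fix S
  show "cmul x y S = mk (x {} * y {} + x {1} * y {1} + x {2} * y {2} + x {3} * y {3} - x {1,2} * y {1,2} - x {1,3} * y {1,3} - x {2,3} * y {2,3} - x {1,2,3} * y {1,2,3}) (x {} * y {1} + x {1} * y {} - x {2} * y {1,2} - x {3} * y {1,3} + x {1,2} * y {2} + x {1,3} * y {3} - x {2,3} * y {1,2,3} - x {1,2,3} * y {2,3}) (x {} * y {2} + x {1} * y {1,2} + x {2} * y {} - x {3} * y {2,3} - x {1,2} * y {1} + x {1,3} * y {1,2,3} + x {2,3} * y {3} + x {1,2,3} * y {1,3}) (x {} * y {3} + x {1} * y {1,3} + x {2} * y {2,3} + x {3} * y {} - x {1,2} * y {1,2,3} - x {1,3} * y {1} - x {2,3} * y {2} - x {1,2,3} * y {1,2}) (x {} * y {1,2} + x {1} * y {2} - x {2} * y {1} + x {3} * y {1,2,3} + x {1,2} * y {} - x {1,3} * y {2,3} + x {2,3} * y {1,3} + x {1,2,3} * y {3}) (x {} * y {1,3} + x {1} * y {3} - x {2} * y {1,2,3} - x {3} * y {1} + x {1,2} * y {2,3} + x {1,3} * y {} - x {2,3} * y {1,2} - x {1,2,3} * y {2}) (x {} * y {2,3} + x {1} * y {1,2,3} + x {2} * y {3} - x {3} * y {2} - x {1,2} * y {1,3} + x {1,3} * y {1,2} + x {2,3} * y {} +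 x {1,2,3} * y {1}) (x {} * y {1,2,3} + x {1} * y {2,3} - x {2} * y {1,3} + x {3} * y {1,2} + x {1,2} * y {3} - x {1,3} * y {2} + x {2,3} * y {1} + x {1,2,3} * y {}) S"
  proof (cases "S \<in> blades")
    case True
    then have "S = {} \<or> S = {1} \<or> S = {2} \<or> S = {3} \<or> S = {1,2} \<or> S = {1,3} \<or> S = {2,3} \<or> S = {1,2,3}"
      by (simp only: blades_eq insert_iff empty_iff simp_thms)
    then show ?thesis
      by (elim disjE) (simp_all only: cmul_alt sum_blades sds bsigns dns if_True if_False simp_thms mk_apply)
  next
    case False
    then have "{} \<noteq> S" "{1} \<noteq> S" "{2} \<noteq> S" "{3} \<noteq> S" "{1,2} \<noteq> S" "{1,3} \<noteq> S" "{2,3} \<noteq> S" "{1,2,3} \<noteq> S"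
      by (simp_all only: blades_eq insert_iff empty_iff simp_thms) blast+
    then show ?thesis by (simp only: cmul_alt sum_blades sds mk_out[OF False] if_False add_0_right)
  qed
qed



lemma mk_cong: "u0 = v0 \<Longrightarrow> u1 = v1 \<Longrightarrow> u2 = v2 \<Longrightarrow> u3 = v3 \<Longrightarrow> u4 = v4 \<Longrightarrow> u5 = v5 \<Longrightarrow> u6 = v6 \<Longrightarrow> u7 = v7
  \<Longrightarrow> mk u0 u1 u2 u3 u4 u5 u6 u7 = mk v0 v1 v2 v3 v4 v5 v6 v7"
  by simp

lemma cmul_mk: "cmul (mk u0 u1 u2 u3 u4 u5 u6 u7) (mk v0 v1 v2 v3 v4 v5 v6 v7) = mk (u0 * v0 + u1 * v1 + u2 * v2 + u3 * v3 - u4 * v4 - u5 * v5 - u6 * v6 - u7 * v7) (u0 * v1 + u1 * v0 - u2 * v4 - u3 * v5 + u4 * v2 + u5 * v3 - u6 * v7 - u7 * v6) (u0 * v2 + u1 * v4 + u2 * v0 - u3 * v6 - u4 * v1 + u5 * v7 + u6 * v3 + u7 * v5) (u0 * v3 + u1 * v5 + u2 * v6 + u3 * v0 - u4 * v7 - u5 * v1 - u6 * v2 - u7 * v4) (u0 * v4 + u1 * v2 - u2 * v1 + u3 * v7 + u4 * v0 - u5 * v6 + u6 * v5 + u7 * v3) (u0 * v5 + u1 * v3 - u2 * v7 - u3 * v1 + u4 * v6 + u5 * v0 - u6 * v4 - u7 * v2) (u0 * v6 + u1 * v7 + u2 * v3 - u3 * v2 - u4 * v5 + u5 * v4 + u6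 * v0 + u7 * v1) (u0 * v7 + u1 * v6 - u2 * v5 + u3 * v4 + u4 * v3 - u5 * v2 + u6 * v1 + u7 * v0)"
  by (simp only: cmul_eq mk_apply)

definition norm8 :: "cl3 \<Rightarrow> cl3" where
  "norm8 x = mk (x {}) (x {1}) (x {2}) (x {3}) (x {1,2}) (x {1,3}) (x {2,3}) (x {1,2,3})"

lemma norm8_mk: "norm8 (mk u0 u1 u2 u3 u4 u5 u6 u7) = mk u0 u1 u2 u3 u4 u5 u6 u7"
  by (simp only: norm8_def mk_apply)

lemma cmul_norm: "norm8 (cmul x y) = cmul x y"
  by (simp only: cmul_eq norm8_mk)

lemma cmul_norm_l: "cmul (norm8 x) y = cmul x y"
  by (simp only: cmul_eq norm8_def mk_apply)

lemma cmul_norm_r: "cmul x (norm8 y) = cmul x y"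
  by (simp only: cmul_eq norm8_def mk_apply)

lemma blade_cases: "S \<in> blades \<Longrightarrow> S = {} \<or> S = {1} \<or> S = {2} \<or> S = {3} \<or> S = {1,2} \<or> S = {1,3} \<or> S = {2,3} \<or> S = {1,2,3}"
  by (simp only: blades_eq insert_iff empty_iff simp_thms)

lemma fun_eq_blades:
  assumes "\<And>S. S \<notin> blades \<Longrightarrow> f S = g S"
   "f {} = g {}" "f {1} = g {1}" "f {2} = g {2}" "f {3} = g {3}"
   "f {1,2} = g {1,2}" "f {1,3} = g {1,3}" "f {2,3} = g {2,3}" "f {1,2,3} = g {1,2,3}"
  shows "f = g"
proof
  fix S show "f S = g S"
  proof (cases "S \<in> blades")
    case True
    from blade_cases[OF True] show ?thesis using assms(2-9) by (elim disjE) simp_all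
  qed (rule assms(1))
qed

lemma crev_mk: "crev (mk u0 u1 u2 u3 u4 u5 u6 u7) = mk u0 u1 u2 u3 (-u4) (-u5) (-u6) (-u7)"
  apply (rule fun_eq_blades)
  apply (simp add: crev_def mk_out)
  apply (simp_all only: crev_def mk_apply)
  apply simp_all
  done

lemma cone_mk: "cone = mk 1 0 0 0 0 0 0 0"
  apply (rule fun_eq_blades)
  apply (simp add: cone_def mk_out blades_eq)
  apply (simp_all only: cone_def mk_apply)
  apply simp_all
  done

lemma cvec1: "cvec 1 = mk 0 1 0 0 0 0 0 0"
  apply (rule fun_eq_blades)
  apply (simp add: cvec_def mk_out blades_eq)
  apply (simp_all only: cvec_def mk_apply)
  apply simp_all
  done

lemma cvec2: "cvec 2 = mk 0 0 1 0 0 0 0 0"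
  apply (rule fun_eq_blades)
  apply (simp add: cvec_def mk_out blades_eq)
  apply (simp_all only: cvec_def mk_apply)
  apply simp_all
  done

lemma cvec3: "cvec 3 = mk 0 0 0 1 0 0 0 0"
  apply (rule fun_eq_blades)
  apply (simp add: cvec_def mk_out blades_eq)
  apply (simp_all only: cvec_def mk_apply)
  apply simp_all
  done

lemma cscale_mk: "cscale c (mk u0 u1 u2 u3 u4 u5 u6 u7) = mk (c*u0) (c*u1) (c*u2) (c*u3) (c*u4) (c*u5) (c*u6) (c*u7)"
  apply (rule fun_eq_blades)
  apply (simp add: cscale_def mk_out)
  apply (simp_all only: cscale_def mk_apply)
  done

lemma cadd_mk: "cadd (mk u0 u1 u2 u3 u4 u5 u6 u7) (mk v0 v1 v2 v3 v4 v5 v6 v7) = mk (u0+v0) (u1+v1) (u2+v2) (u3+v3) (u4+v4) (u5+v5) (u6+v6) (u7+v7)"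
  apply (rule fun_eq_blades)
  apply (simp add: cadd_def mk_out)
  apply (simp_all only: cadd_def mk_apply)
  done

lemma a1_mk: "a1 = mk 0 0 1 0 0 0 0 0" by (simp only: a1_def cvec2)
lemma a3_mk: "a3 = mk 0 1 0 0 0 0 0 0" by (simp only: a3_def cvec1)
lemma a2_mk: "a2 = mk 0 (-tau/2) (-1/2) (-(tau-1)/2) 0 0 0 0"
  unfolding a2_def cvec1 cvec2 cvec3 cscale_mk cadd_mk by (rule mk_cong) simp_all

lemma cmul_assoc: "cmul (cmul x y) z = cmul x (cmul y z)"
  apply (simp only: cmul_eq mk_apply)
  apply (rule mk_cong)
  apply (simp_all add: algebra_simps)
  done

lemma crev_apply:
  "crev x {} = x {}" "crev x {1} = x {1}" "crev x {2} = x {2}" "crev x {3} = x {3}"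
  "crev x {1,2} = - x {1,2}" "crev x {1,3} = - x {1,3}" "crev x {2,3} = - x {2,3}" "crev x {1,2,3} = - x {1,2,3}"
  by (simp_all add: crev_def)

lemma crev_cmul: "crev (cmul x y) = cmul (crev y) (crev x)"
  apply (simp only: cmul_eq crev_mk crev_apply)
  apply (rule mk_cong)
  apply (simp_all add: algebra_simps)
  done

lemma cprod_Nil: "cprod [] = cone" by (simp add: cprod_def)
lemma cprod_Cons: "cprod (a # xs) = cmul a (cprod xs)" by (simp add: cprod_def)

lemma cprod_norm: "norm8 (cprod xs) = cprod xs"
  by (cases xs) (simp_all only: cprod_Nil cprod_Cons cmul_norm cone_mk norm8_mk)

lemma cmul_cone_l: "cmul cone y = norm8 y"
  unfolding cone_mk cmul_eq norm8_def mk_apply by (rule mk_cong) simp_all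

lemma cmul_cone_r: "cmul y cone = norm8 y"
  unfolding cone_mk cmul_eq norm8_def mk_apply by (rule mk_cong) simp_all

lemma cprod_append: "cprod (xs @ ys) = cmul (cprod xs) (cprod ys)"
proof (induction xs)
  case Nil
  then show ?case by (simp only: append.simps cprod_Nil cmul_cone_l cprod_norm)
next
  case (Cons a xs)
  then show ?case by (simp only: append.simps cprod_Cons cmul_assoc)
qed

lemma crev_a: "x \<in> {a1, a2, a3} \<Longrightarrow> crev x = x"
  by (auto simp only: insert_iff empty_iff a1_mk a2_mk a3_mk crev_mk minus_zero)

lemma crev_cone: "crev cone = cone"
  by (simp only: cone_mk crev_mk minus_zero)

lemma crev_cprod: "set xs \<subseteq> {a1, a2, a3} \<Longrightarrow> crev (cprod xs) = cprod (rev xs)"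
proof (induction xs)
  case Nil
  then show ?case by (simp only: rev.simps cprod_Nil crev_cone)
next
  case (Cons a xs)
  then have a: "a \<in> {a1,a2,a3}" and xs: "set xs \<subseteq> {a1,a2,a3}" by auto
  have "crev (cprod (a # xs)) = cmul (cprod (rev xs)) a"
    by (simp only: cprod_Cons crev_cmul Cons.IH[OF xs] crev_a[OF a])
  also have "\<dots> = cprod (rev (a # xs))"
    by (simp only: rev.simps cprod_append cprod_Cons cprod_Nil cmul_cone_r cmul_norm_r)
  finally show ?case .
qed

lemma neg_cprod: "cscale (-1) (cprod zs) = cprod ([a1,a3,a1,a3] @ zs)"
proof -
  have m: "cprod [a1,a3,a1,a3] = mk (-1) 0 0 0 0 0 0 0"
    unfolding cprod_Cons cprod_Nil a1_mk a3_mk cone_mk cmul_mk by (rule mk_cong) simp_all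
  have "cprod ([a1,a3,a1,a3] @ zs) = cmul (mk (-1) 0 0 0 0 0 0 0) (norm8 (cprod zs))"
    by (simp only: cprod_append m cprod_norm)
  also have "\<dots> = cscale (-1) (norm8 (cprod zs))"
    unfolding norm8_def cmul_mk cscale_mk by (rule mk_cong) simp_all
  finally show ?thesis by (simp only: cprod_norm)
qed

lemma srefl_closed:
  assumes "\<alpha> \<in> twoI" "\<beta> \<in> twoI" shows "srefl \<alpha> \<beta> \<in> twoI"
proof -
  obtain xs where xs: "\<alpha> = cprod xs" "set xs \<subseteq> {a1,a2,a3}" "even (length xs)"
    using assms(1) unfolding twoI_def by blast
  obtain ys where ys: "\<beta> = cprod ys" "set ys \<subseteq> {a1,a2,a3}" "even (length ys)"
    using assms(2) unfolding twoI_def by blast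
  have "srefl \<alpha> \<beta> = cprod ([a1,a3,a1,a3] @ xs @ rev ys @ xs)"
    unfolding srefl_def xs(1) ys(1) crev_cprod[OF ys(2)]
    by (simp only: cprod_append[symmetric] neg_cprod)
  moreover have "set ([a1,a3,a1,a3] @ xs @ rev ys @ xs) \<subseteq> {a1,a2,a3}" using xs ys by auto
  moreover have "even (length ([a1,a3,a1,a3] @ xs @ rev ys @ xs))" using xs ys by simp
  ultimately show ?thesis unfolding twoI_def by blast
qed

lemma gen_roots_twoI: "S \<subseteq> twoI \<Longrightarrow> gen_roots S \<subseteq> twoI"
proof
  fix x assume S: "S \<subseteq> twoI" and x: "x \<in> gen_roots S"
  from x show "x \<in> twoI"
    by (induction rule: gen_roots.induct) (use S in \<open>auto intro: srefl_closed\<close>)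
qed

lemma cprod_in_twoI: "set xs \<subseteq> {a1,a2,a3} \<Longrightarrow> even (length xs) \<Longrightarrow> cprod xs \<in> twoI"
  unfolding twoI_def by blast

lemma sinner_mk: "sinner (mk u0 u1 u2 u3 u4 u5 u6 u7) (mk v0 v1 v2 v3 v4 v5 v6 v7)
  = u0*v0 + u1*v1 + u2*v2 + u3*v3 + u4*v4 + u5*v5 + u6*v6 + u7*v7"
  unfolding sinner_def crev_mk cmul_mk mk_apply by (simp add: algebra_simps)

lemma tau2: "tau * tau = tau + 1"
  unfolding tau_def by (simp add: field_simps)


lemma ra_1: "cprod [a1] = mk 0 0 1 0 0 0 0 0"
proof -
  have "cprod [a1] = cmul a1 (mk 1 0 0 0 0 0 0 0)"
    by (subst cprod_Cons) (simp only: cprod_Nil cone_mk)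
  also have "\<dots> = mk 0 0 1 0 0 0 0 0"
    unfolding a1_mk cmul_mk by (rule mk_cong; simp add: tau_def field_simps)
  finally show ?thesis .
qed

lemma ra_0: "cprod [a1, a1] = mk 1 0 0 0 0 0 0 0"
proof -
  have "cprod [a1, a1] = cmul a1 (mk 0 0 1 0 0 0 0 0)"
    by (subst cprod_Cons) (simp only: ra_1)
  also have "\<dots> = mk 1 0 0 0 0 0 0 0"
    unfolding a1_mk cmul_mk by (rule mk_cong; simp add: tau_def field_simps)
  finally show ?thesis .
qed

lemma rb_1: "cprod [a2] = mk 0 (0 + (-1/2) * tau) ((-1/2)) ((1/2) + (-1/2) * tau) 0 0 0 0"
proof -
  have "cprod [a2] = cmul a2 (mk 1 0 0 0 0 0 0 0)"
    by (subst cprod_Cons) (simp only: cprod_Nil cone_mk)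
  also have "\<dots> = mk 0 (0 + (-1/2) * tau) ((-1/2)) ((1/2) + (-1/2) * tau) 0 0 0 0"
    unfolding a2_mk cmul_mk by (rule mk_cong; simp add: tau_def field_simps)
  finally show ?thesis .
qed

lemma rb_0: "cprod [a1, a2] = mk ((-1/2)) 0 0 0 (0 + (1/2) * tau) 0 ((1/2) + (-1/2) * tau) 0"
proof -
  have "cprod [a1, a2] = cmul a1 (mk 0 (0 + (-1/2) * tau) ((-1/2)) ((1/2) + (-1/2) * tau) 0 0 0 0)"
    by (subst cprod_Cons) (simp only: rb_1)
  also have "\<dots> = mk ((-1/2)) 0 0 0 (0 + (1/2) * tau) 0 ((1/2) + (-1/2) * tau) 0"
    unfolding a1_mk cmul_mk by (rule mk_cong; simp add: tau_def field_simps)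
  finally show ?thesis .
qed

lemma rc_1: "cprod [a3] = mk 0 1 0 0 0 0 0 0"
proof -
  have "cprod [a3] = cmul a3 (mk 1 0 0 0 0 0 0 0)"
    by (subst cprod_Cons) (simp only: cprod_Nil cone_mk)
  also have "\<dots> = mk 0 1 0 0 0 0 0 0"
    unfolding a3_mk cmul_mk by (rule mk_cong; simp add: tau_def field_simps)
  finally show ?thesis .
qed

lemma rc_0: "cprod [a2, a3] = mk (0 + (-1/2) * tau) 0 0 0 (1/2) ((-1/2) + (1/2) * tau) 0 0"
proof -
  have "cprod [a2, a3] = cmul a2 (mk 0 1 0 0 0 0 0 0)"
    by (subst cprod_Cons) (simp only: rc_1)
  also have "\<dots> = mk (0 + (-1/2) * tau) 0 0 0 (1/2) ((-1/2) + (1/2) * tau) 0 0"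
    unfolding a2_mk cmul_mk by (rule mk_cong; simp add: tau_def field_simps)
  finally show ?thesis .
qed

lemma rd_7: "cprod [a3] = mk 0 1 0 0 0 0 0 0"
proof -
  have "cprod [a3] = cmul a3 (mk 1 0 0 0 0 0 0 0)"
    by (subst cprod_Cons) (simp only: cprod_Nil cone_mk)
  also have "\<dots> = mk 0 1 0 0 0 0 0 0"
    unfolding a3_mk cmul_mk by (rule mk_cong; simp add: tau_def field_simps)
  finally show ?thesis .
qed

lemma rd_6: "cprod [a2, a3] = mk (0 + (-1/2) * tau) 0 0 0 (1/2) ((-1/2) + (1/2) * tau) 0 0"
proof -
  have "cprod [a2, a3] = cmul a2 (mk 0 1 0 0 0 0 0 0)"
    by (subst cprod_Cons) (simp only: rd_7)
  also have "\<dots> = mk (0 + (-1/2) * tau) 0 0 0 (1/2) ((-1/2) + (1/2) * tau) 0 0"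
    unfolding a2_mk cmul_mk by (rule mk_cong; simp add: tau_def field_simps)
  finally show ?thesis .
qed

lemma rd_5: "cprod [a1, a2, a3] = mk 0 ((-1/2)) (0 + (-1/2) * tau) 0 0 0 0 ((1/2) + (-1/2) * tau)"
proof -
  have "cprod [a1, a2, a3] = cmul a1 (mk (0 + (-1/2) * tau) 0 0 0 (1/2) ((-1/2) + (1/2) * tau) 0 0)"
    by (subst cprod_Cons) (simp only: rd_6)
  also have "\<dots> = mk 0 ((-1/2)) (0 + (-1/2) * tau) 0 0 0 0 ((1/2) + (-1/2) * tau)"
    unfolding a1_mk cmul_mk by (rule mk_cong; simp add: tau_def field_simps)
  finally show ?thesis .
qed

lemma rd_4: "cprod [a3, a1, a2, a3] = mk ((-1/2)) 0 0 0 (0 + (-1/2) * tau) 0 ((1/2) + (-1/2) * tau) 0"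
proof -
  have "cprod [a3, a1, a2, a3] = cmul a3 (mk 0 ((-1/2)) (0 + (-1/2) * tau) 0 0 0 0 ((1/2) + (-1/2) * tau))"
    by (subst cprod_Cons) (simp only: rd_5)
  also have "\<dots> = mk ((-1/2)) 0 0 0 (0 + (-1/2) * tau) 0 ((1/2) + (-1/2) * tau) 0"
    unfolding a3_mk cmul_mk by (rule mk_cong; simp add: tau_def field_simps)
  finally show ?thesis .
qed

lemma rd_3: "cprod [a2, a3, a1, a2, a3] = mk 0 0 (0 + (1/2) * tau) ((-1/2) + (1/2) * tau) 0 0 0 (1/2)"
proof -
  have "cprod [a2, a3, a1, a2, a3] = cmul a2 (mk ((-1/2)) 0 0 0 (0 + (-1/2) * tau) 0 ((1/2) + (-1/2) * tau) 0)"
    by (subst cprod_Cons) (simp only: rd_4)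
  also have "\<dots> = mk 0 0 (0 + (1/2) * tau) ((-1/2) + (1/2) * tau) 0 0 0 (1/2)"
    unfolding a2_mk cmul_mk by (rule mk_cong; simp add: tau_def field_simps)
  finally show ?thesis .
qed

lemma rd_2: "cprod [a3, a2, a3, a1, a2, a3] = mk 0 0 0 0 (0 + (1/2) * tau) ((-1/2) + (1/2) * tau) (1/2) 0"
proof -
  have "cprod [a3, a2, a3, a1, a2, a3] = cmul a3 (mk 0 0 (0 + (1/2) * tau) ((-1/2) + (1/2) * tau) 0 0 0 (1/2))"
    by (subst cprod_Cons) (simp only: rd_3)
  also have "\<dots> = mk 0 0 0 0 (0 + (1/2) * tau) ((-1/2) + (1/2) * tau) (1/2) 0"
    unfolding a3_mk cmul_mk by (rule mk_cong; simp add: tau_def field_simps)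
  finally show ?thesis .
qed

lemma rd_1: "cprod [a2, a3, a2, a3, a1, a2, a3] = mk 0 (1/2) ((-1/2)) ((-1/2)) 0 0 0 ((-1/2))"
proof -
  have "cprod [a2, a3, a2, a3, a1, a2, a3] = cmul a2 (mk 0 0 0 0 (0 + (1/2) * tau) ((-1/2) + (1/2) * tau) (1/2) 0)"
    by (subst cprod_Cons) (simp only: rd_2)
  also have "\<dots> = mk 0 (1/2) ((-1/2)) ((-1/2)) 0 0 0 ((-1/2))"
    unfolding a2_mk cmul_mk by (rule mk_cong; simp add: tau_def field_simps)
  finally show ?thesis .
qed

lemma rd_0: "cprod [a1, a2, a3, a2, a3, a1, a2, a3] = mk ((-1/2)) 0 0 0 ((-1/2)) (1/2) ((-1/2)) 0"
proof -
  have "cprod [a1, a2, a3, a2, a3, a1, a2, a3] = cmul a1 (mk 0 (1/2) ((-1/2)) ((-1/2)) 0 0 0 ((-1/2)))"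
    by (subst cprod_Cons) (simp only: rd_1)
  also have "\<dots> = mk ((-1/2)) 0 0 0 ((-1/2)) (1/2) ((-1/2)) 0"
    unfolding a1_mk cmul_mk by (rule mk_cong; simp add: tau_def field_simps)
  finally show ?thesis .
qed

lemma re_7: "cprod [a2] = mk 0 (0 + (-1/2) * tau) ((-1/2)) ((1/2) + (-1/2) * tau) 0 0 0 0"
proof -
  have "cprod [a2] = cmul a2 (mk 1 0 0 0 0 0 0 0)"
    by (subst cprod_Cons) (simp only: cprod_Nil cone_mk)
  also have "\<dots> = mk 0 (0 + (-1/2) * tau) ((-1/2)) ((1/2) + (-1/2) * tau) 0 0 0 0"
    unfolding a2_mk cmul_mk by (rule mk_cong; simp add: tau_def field_simps)
  finally show ?thesis .
qed

lemma re_6: "cprod [a3, a2] = mk (0 + (-1/2) * tau) 0 0 0 ((-1/2)) ((1/2) + (-1/2) * tau) 0 0"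
proof -
  have "cprod [a3, a2] = cmul a3 (mk 0 (0 + (-1/2) * tau) ((-1/2)) ((1/2) + (-1/2) * tau) 0 0 0 0)"
    by (subst cprod_Cons) (simp only: re_7)
  also have "\<dots> = mk (0 + (-1/2) * tau) 0 0 0 ((-1/2)) ((1/2) + (-1/2) * tau) 0 0"
    unfolding a3_mk cmul_mk by (rule mk_cong; simp add: tau_def field_simps)
  finally show ?thesis .
qed

lemma re_5: "cprod [a1, a3, a2] = mk 0 (1/2) (0 + (-1/2) * tau) 0 0 0 0 ((-1/2) + (1/2) * tau)"
proof -
  have "cprod [a1, a3, a2] = cmul a1 (mk (0 + (-1/2) * tau) 0 0 0 ((-1/2)) ((1/2) + (-1/2) * tau) 0 0)"
    by (subst cprod_Cons) (simp only: re_6)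
  also have "\<dots> = mk 0 (1/2) (0 + (-1/2) * tau) 0 0 0 0 ((-1/2) + (1/2) * tau)"
    unfolding a1_mk cmul_mk by (rule mk_cong; simp add: tau_def field_simps)
  finally show ?thesis .
qed

lemma re_4: "cprod [a2, a1, a3, a2] = mk 0 0 0 0 (0 + (1/2) * tau) ((-1/2) + (1/2) * tau) ((-1/2)) 0"
proof -
  have "cprod [a2, a1, a3, a2] = cmul a2 (mk 0 (1/2) (0 + (-1/2) * tau) 0 0 0 0 ((-1/2) + (1/2) * tau))"
    by (subst cprod_Cons) (simp only: re_5)
  also have "\<dots> = mk 0 0 0 0 (0 + (1/2) * tau) ((-1/2) + (1/2) * tau) ((-1/2)) 0"
    unfolding a2_mk cmul_mk by (rule mk_cong; simp add: tau_def field_simps)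
  finally show ?thesis .
qed

lemma re_3: "cprod [a3, a2, a1, a3, a2] = mk 0 0 (0 + (1/2) * tau) ((-1/2) + (1/2) * tau) 0 0 0 ((-1/2))"
proof -
  have "cprod [a3, a2, a1, a3, a2] = cmul a3 (mk 0 0 0 0 (0 + (1/2) * tau) ((-1/2) + (1/2) * tau) ((-1/2)) 0)"
    by (subst cprod_Cons) (simp only: re_4)
  also have "\<dots> = mk 0 0 (0 + (1/2) * tau) ((-1/2) + (1/2) * tau) 0 0 0 ((-1/2))"
    unfolding a3_mk cmul_mk by (rule mk_cong; simp add: tau_def field_simps)
  finally show ?thesis .
qed

lemma re_2: "cprod [a1, a3, a2, a1, a3, a2] = mk (0 + (1/2) * tau) 0 0 0 0 (1/2) ((-1/2) + (1/2) * tau) 0"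
proof -
  have "cprod [a1, a3, a2, a1, a3, a2] = cmul a1 (mk 0 0 (0 + (1/2) * tau) ((-1/2) + (1/2) * tau) 0 0 0 ((-1/2)))"
    by (subst cprod_Cons) (simp only: re_3)
  also have "\<dots> = mk (0 + (1/2) * tau) 0 0 0 0 (1/2) ((-1/2) + (1/2) * tau) 0"
    unfolding a1_mk cmul_mk by (rule mk_cong; simp add: tau_def field_simps)
  finally show ?thesis .
qed

lemma re_1: "cprod [a2, a1, a3, a2, a1, a3, a2] = mk 0 ((-1/2)) ((1/2) + (-1/2) * tau) (0 + (-1/2) * tau) 0 0 0 0"
proof -
  have "cprod [a2, a1, a3, a2, a1, a3, a2] = cmul a2 (mk (0 + (1/2) * tau) 0 0 0 0 (1/2) ((-1/2) + (1/2) * tau) 0)"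
    by (subst cprod_Cons) (simp only: re_2)
  also have "\<dots> = mk 0 ((-1/2)) ((1/2) + (-1/2) * tau) (0 + (-1/2) * tau) 0 0 0 0"
    unfolding a2_mk cmul_mk by (rule mk_cong; simp add: tau_def field_simps)
  finally show ?thesis .
qed

lemma re_0: "cprod [a3, a2, a1, a3, a2, a1, a3, a2] = mk ((-1/2)) 0 0 0 ((1/2) + (-1/2) * tau) (0 + (-1/2) * tau) 0 0"
proof -
  have "cprod [a3, a2, a1, a3, a2, a1, a3, a2] = cmul a3 (mk 0 ((-1/2)) ((1/2) + (-1/2) * tau) (0 + (-1/2) * tau) 0 0 0 0)"
    by (subst cprod_Cons) (simp only: re_1)
  also have "\<dots> = mk ((-1/2)) 0 0 0 ((1/2) + (-1/2) * tau) (0 + (-1/2) * tau) 0 0"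
    unfolding a3_mk cmul_mk by (rule mk_cong; simp add: tau_def field_simps)
  finally show ?thesis .
qed

lemma all2: "(\<forall>i<(2::nat). P i) \<longleftrightarrow> P 0 \<and> P 1"
  by (auto simp: numeral_eq_Suc less_Suc_eq)
lemma all4: "(\<forall>i<(4::nat). P i) \<longleftrightarrow> P 0 \<and> P 1 \<and> P 2 \<and> P 3"
  by (auto simp: numeral_eq_Suc less_Suc_eq)

lemma all2': "(\<forall>i<Suc (Suc 0). P i) \<longleftrightarrow> P 0 \<and> P 1"
  by (auto simp: less_Suc_eq)
lemma all4': "(\<forall>i<Suc (Suc (Suc (Suc 0))). P i) \<longleftrightarrow> P 0 \<and> P 1 \<and> P 2 \<and> P 3"
  by (auto simp: less_Suc_eq numeral_eq_Suc)
lemma L2: "length [x, y] = 2" by simp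

theorem mainTheorem2:
  shows "cprod [a1, a1] = cone
    \<and> simple_roots_in_2I [cprod [a1, a1], cprod [a1, a2]] cartan_A2
    \<and> simple_roots_in_2I [cprod [a1, a1], cprod [a2, a3]] cartan_H2
    \<and> simple_roots_in_2I
           [cprod [a1, a1], cprod [a1, a2], cprod [a1, a2, a3, a2, a3, a1, a2, a3],
            cprod [a3, a2, a1, a3, a2, a1, a3, a2]] cartan_D4"
proof -
  have T: "cprod [a1, a1] \<in> twoI" "cprod [a1, a2] \<in> twoI" "cprod [a2, a3] \<in> twoI"
    "cprod [a1, a2, a3, a2, a3, a1, a2, a3] \<in> twoI" "cprod [a3, a2, a1, a3, a2, a1, a3, a2] \<in> twoI"
    by (rule cprod_in_twoI; simp)+
  have c1: "cprod [a1, a1] = cone" by (simp only: ra_0 cone_mk)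
  have A: "simple_roots_in_2I [cprod [a1, a1], cprod [a1, a2]] cartan_A2"
    unfolding simple_roots_in_2I_def
  proof (intro conjI)
    show "set [cprod [a1, a1], cprod [a1, a2]] \<subseteq> twoI" using T by simp
    then show "gen_roots (set [cprod [a1, a1], cprod [a1, a2]]) \<subseteq> twoI" by (rule gen_roots_twoI)
    show "\<forall>i<length [cprod [a1, a1], cprod [a1, a2]]. \<forall>j<length [cprod [a1, a1], cprod [a1, a2]].
      cartan [cprod [a1, a1], cprod [a1, a2]] i j = cartan_A2 ! i ! j"
      unfolding L2[of "cprod [a1, a1]" "cprod [a1, a2]"] all2 cartan_def ra_0 rb_0
      by (simp add: all2' cartan_A2_def sinner_mk tau_def field_simps)
  qed (simp_all add: all2' cartan_A2_def)
  have H: "simple_roots_in_2I [cprod [a1, a1], cprod [a2, a3]] cartan_H2"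
    unfolding simple_roots_in_2I_def
  proof (intro conjI)
    show "set [cprod [a1, a1], cprod [a2, a3]] \<subseteq> twoI" using T by simp
    then show "gen_roots (set [cprod [a1, a1], cprod [a2, a3]]) \<subseteq> twoI" by (rule gen_roots_twoI)
    show "\<forall>i<length [cprod [a1, a1], cprod [a2, a3]]. \<forall>j<length [cprod [a1, a1], cprod [a2, a3]].
      cartan [cprod [a1, a1], cprod [a2, a3]] i j = cartan_H2 ! i ! j"
      unfolding L2[of "cprod [a1, a1]" "cprod [a2, a3]"] all2 cartan_def ra_0 rc_0
      by (simp add: all2' cartan_H2_def sinner_mk tau_def field_simps)
  qed (simp_all add: all2' cartan_H2_def)
  have D: "simple_roots_in_2I
           [cprod [a1, a1], cprod [a1, a2], cprod [a1, a2, a3, a2, a3, a1, a2, a3],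
            cprod [a3, a2, a1, a3, a2, a1, a3, a2]] cartan_D4"
    unfolding simple_roots_in_2I_def
  proof (intro conjI)
    show "set [cprod [a1, a1], cprod [a1, a2], cprod [a1, a2, a3, a2, a3, a1, a2, a3],
            cprod [a3, a2, a1, a3, a2, a1, a3, a2]] \<subseteq> twoI" using T by simp
    then show "gen_roots (set [cprod [a1, a1], cprod [a1, a2], cprod [a1, a2, a3, a2, a3, a1, a2, a3],
            cprod [a3, a2, a1, a3, a2, a1, a3, a2]]) \<subseteq> twoI" by (rule gen_roots_twoI)
    have L: "length [cprod [a1, a1], cprod [a1, a2], cprod [a1, a2, a3, a2, a3, a1, a2, a3],
            cprod [a3, a2, a1, a3, a2, a1, a3, a2]] = 4" by simp
    show "\<forall>i<length [cprod [a1, a1], cprod [a1, a2], cprod [a1, a2, a3, a2, a3, a1, a2, a3],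
            cprod [a3, a2, a1, a3, a2, a1, a3, a2]]. \<forall>j<length [cprod [a1, a1], cprod [a1, a2], cprod [a1, a2, a3, a2, a3, a1, a2, a3],
            cprod [a3, a2, a1, a3, a2, a1, a3, a2]].
      cartan [cprod [a1, a1], cprod [a1, a2], cprod [a1, a2, a3, a2, a3, a1, a2, a3],
            cprod [a3, a2, a1, a3, a2, a1, a3, a2]] i j = cartan_D4 ! i ! j"
      unfolding L all4 cartan_def ra_0 rb_0 rd_0 re_0
      by (simp add: all4' cartan_D4_def sinner_mk tau_def field_simps)
  qed (simp_all add: all4' cartan_D4_def)
  show ?thesis using c1 A H D by blast
qed

end
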